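(* For every positive integer $n$ there exist a present-bias parameter $b>1$, an instance $G$ with $O(n)$ vertices, and a set $S$ of $2^n$ distinct rewards such that for each reward $R\in S$ placed at $t$ the sophisticated agent (with abandonment) reaches $t$, and the paths it traverses for different rewards in $S$ are pairwise distinct. In particular the number of distinct paths taken as the reward varies is exponential in the size of the graph.
   Context: An instance is a finite directed acyclic graph $G=(V,E)$ with nonnegative edge costs $c(u,v)$, start node $s$ and target node $t$, where $t$ is the unique node with no outgoing edges. Sophisticated agent with bias $b$ and reward $R$ at $t$, which may abandon: process nodes in reverse topological order; $t$ is never abandoned and $C_R(t)=0$. For $u\neq t$, among out-edges $(u,v)$ with $v$ not abandoned let $P(u,v)=b\,c(u,v)+C_R(v)$; if none exists or all have $P(u,v)>R$, $u$ is abandoned; otherwise the agent at $u$ moves to $v^*(u)\in\arg\min P(u,v)$ and $C_R(u)=c(u,v^*(u))+C_R(v^*(u))$. The agent reaches $t$ iff $s$ is not abandoned, following $s,v^*(s),\dots,t$. *)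

theory Defs
  imports Complex_Main
begin

definition is_instance ::
  "nat set \<Rightarrow> (nat \<times> nat) set \<Rightarrow> (nat \<times> nat \<Rightarrow> real) \<Rightarrow> nat \<Rightarrow> nat \<Rightarrow> bool" where
  "is_instance V E c s t \<longleftrightarrow>
     finite V \<and> E \<subseteq> V \<times> V \<and> acyclic E \<and> s \<in> V \<and> t \<in> V \<and>
     (\<forall>e\<in>E. c e \<ge> 0) \<and>
     (\<forall>u\<in>V. (\<not> (\<exists>v. (u, v) \<in> E)) \<longleftrightarrow> u = t)"

text \<open>A consistent outcome of the backward-induction process of the sophisticated agent
  with bias b and reward R (with abandonment): ab is the set of abandoned nodes,
  CR the perceived-free cost C_R, nxt the chosen successor v*(u) (ties broken arbitrarily).\<close>
definition soph_plan ::
  "nat set \<Rightarrow> (nat \<times> nat) set \<Rightarrow> (nat \<times> nat \<Rightarrow> real) \<Rightarrow> nat \<Rightarrow> real \<Rightarrow> real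
   \<Rightarrow> nat set \<Rightarrow> (nat \<Rightarrow> real) \<Rightarrow> (nat \<Rightarrow> nat) \<Rightarrow> bool" where
  "soph_plan V E c t b R ab CR nxt \<longleftrightarrow>
     ab \<subseteq> V \<and> t \<notin> ab \<and> CR t = 0 \<and>
     (\<forall>u\<in>V - {t}.
        let A = {v. (u, v) \<in> E \<and> v \<notin> ab} in
        (u \<in> ab \<longleftrightarrow> (A = {} \<or> (\<forall>v\<in>A. b * c (u, v) + CR v > R))) \<and>
        (u \<notin> ab \<longrightarrow>
            nxt u \<in> A \<and>
            (\<forall>v\<in>A. b * c (u, nxt u) + CR (nxt u) \<le> b * c (u, v) + CR v) \<and>
            CR u = c (u, nxt u) + CR (nxt u)))"

definition agent_path :: "(nat \<Rightarrow> nat) \<Rightarrow> nat \<Rightarrow> nat \<Rightarrow> nat list" where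
  "agent_path nxt s t = map (\<lambda>i. (nxt ^^ i) s) [0..<Suc (LEAST k. (nxt ^^ k) s = t)]"

end

theory Submission imports Defs begin

definition Vn :: "nat \<Rightarrow> nat set" where "Vn n = {0..2*n}"
definition En :: "nat \<Rightarrow> (nat \<times> nat) set" where
  "En n = {(2*j+2, 2*j) | j. j<n} \<union> {(2*j+2, 2*j+1) | j. j<n} \<union> {(2*j+1, 2*j) | j. j<n}"
definition w :: "nat \<Rightarrow> nat \<Rightarrow> real" where "w n j = (2::real)^n / 2^j"
definition lo :: "nat \<Rightarrow> nat \<Rightarrow> real" where "lo n j = (real j + 4) * w n j"
definition cx :: "nat \<Rightarrow> nat \<Rightarrow> real" where "cx n j = (real j + 5) * w n j / 2"
definition cy :: "nat \<Rightarrow> nat \<Rightarrow> real" where "cy n j = (real j + 3) * w n j / 2"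
definition cn :: "nat \<Rightarrow> nat \<times> nat \<Rightarrow> real" where
  "cn n p = (if even (fst p) then (if odd (snd p) then 0 else cy n (fst p div 2 - 1)) else cx n (fst p div 2))"

lemma w_pos: "w n j > 0" by (simp add: w_def)
lemma w_Suc: "w n (Suc j) = w n j / 2" by (simp add: w_def)
lemma w_nn: "w n n = 1" by (simp add: w_def)

lemma E_even: "((2*j+2, v) \<in> En n) = (j < n \<and> (v = 2*j \<or> v = 2*j+1))"
  unfolding En_def by (auto; presburger)
lemma E_odd: "((2*j+1, v) \<in> En n) = (j<n \<and> v = 2*j)"
  unfolding En_def by (auto; presburger)
lemma E_to_odd: "((u, 2*j+1) \<in> En n) = (j<n \<and> u = 2*j+2)"
  unfolding En_def by (auto; presburger)
lemma E_even': "((Suc (Suc (2*j)), v) \<in> En n) = (j < n \<and> (v = 2*j \<or> v = Suc (2*j)))"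
  using E_even[of j v n] by simp
lemma E_odd': "((Suc (2*j), v) \<in> En n) = (j<n \<and> v = 2*j)"
  using E_odd[of j v n] by simp
lemma c1': "cn n (Suc (Suc (2*j)), 2*j) = cy n j" by (simp add: cn_def)
lemma c2': "cn n (Suc (Suc (2*j)), Suc (2*j)) = 0" by (simp add: cn_def)
lemma c3': "cn n (Suc (2*j), 2*j) = cx n j" by (simp add: cn_def)
lemma E_lt: "(u,v) \<in> En n \<Longrightarrow> v < u" unfolding En_def by auto
lemma E_sub: "En n \<subseteq> Vn n \<times> Vn n" unfolding En_def Vn_def by auto
lemma V_cases: "u \<in> Vn n \<Longrightarrow> u \<noteq> 0 \<Longrightarrow> \<exists>j<n. u = 2*j+1 \<or> u = 2*j+2"
  unfolding Vn_def by (cases "even u") (auto elim!: evenE oddE, presburger+)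

lemma c1: "cn n (2*j+2, 2*j) = cy n j" by (simp add: cn_def)
lemma c2: "cn n (2*j+2, 2*j+1) = 0" by (simp add: cn_def)
lemma c3: "cn n (2*j+1, 2*j) = cx n j" by (simp add: cn_def)

lemma trancl_lt: "(u,v) \<in> (En n)\<^sup>+ \<Longrightarrow> v < u"
  by (induction rule: trancl_induct) (auto dest: E_lt)

lemma inst: "is_instance (Vn n) (En n) (cn n) (2*n) 0"
  unfolding is_instance_def
proof (intro conjI)
  show "finite (Vn n)" by (simp add: Vn_def)
  show "En n \<subseteq> Vn n \<times> Vn n" by (rule E_sub)
  show "acyclic (En n)" unfolding acyclic_def using trancl_lt by blast
  show "2*n \<in> Vn n" "0 \<in> Vn n" by (auto simp: Vn_def)
  show "\<forall>e\<in>En n. 0 \<le> cn n e" unfolding En_def by (auto simp: cn_def cx_def cy_def w_def)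
  show "\<forall>u\<in>Vn n. (\<nexists>v. (u, v) \<in> En n) = (u = 0)"
  proof
    fix u assume u: "u \<in> Vn n"
    show "(\<nexists>v. (u, v) \<in> En n) = (u = 0)"
    proof (cases "u = 0")
      case True then show ?thesis using E_lt by blast
    next
      case False
      then obtain j where "j<n" "u = 2*j+1 \<or> u = 2*j+2" using V_cases u by blast
      then show ?thesis using False E_even E_odd by blast
    qed
  qed
qed

lemma card_V: "real (card (Vn n)) \<le> 3 * real n" if "n \<ge> 1"
  using that by (simp add: Vn_def)


lemma soph_ab:
  assumes "soph_plan V E c t b R ab CR nxt" "u \<in> V" "u \<noteq> t"
  shows "u \<in> ab \<longleftrightarrow> (\<forall>v. (u,v)\<in>E \<and> v\<notin>ab \<longrightarrow> b * c (u,v) + CR v > R)"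
  using assms unfolding soph_plan_def Let_def by auto

lemma soph_nxt:
  assumes "soph_plan V E c t b R ab CR nxt" "u \<in> V" "u \<noteq> t" "u \<notin> ab"
  shows "(u, nxt u)\<in>E" "nxt u \<notin> ab"
    "\<And>v. (u,v)\<in>E \<Longrightarrow> v\<notin>ab \<Longrightarrow> b*c(u,nxt u)+CR(nxt u) \<le> b*c(u,v)+CR v"
    "CR u = c(u,nxt u) + CR(nxt u)"
  using assms unfolding soph_plan_def Let_def by auto

lemma soph_planI:
  assumes "ab \<subseteq> V" "t \<notin> ab" "CR t = 0"
    "\<And>u. u \<in> V \<Longrightarrow> u \<noteq> t \<Longrightarrow> u \<in> ab \<longleftrightarrow> (\<forall>v. (u,v)\<in>E \<and> v\<notin>ab \<longrightarrow> b * c (u,v) + CR v > R)"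
    "\<And>u. u \<in> V \<Longrightarrow> u \<noteq> t \<Longrightarrow> u \<notin> ab \<Longrightarrow> (u, nxt u)\<in>E \<and> nxt u \<notin> ab \<and>
        (\<forall>v. (u,v)\<in>E \<and> v\<notin>ab \<longrightarrow> b*c(u,nxt u)+CR(nxt u) \<le> b*c(u,v)+CR v) \<and>
        CR u = c(u,nxt u) + CR(nxt u)"
  shows "soph_plan V E c t b R ab CR nxt"
  unfolding soph_plan_def Let_def
proof (intro conjI ballI)
  fix u assume u: "u \<in> V - {t}"
  have e: "({v. (u, v) \<in> E \<and> v \<notin> ab} = {} \<or> (\<forall>v\<in>{v. (u, v) \<in> E \<and> v \<notin> ab}. R < b * c (u, v) + CR v))
     = (\<forall>v. (u,v)\<in>E \<and> v\<notin>ab \<longrightarrow> b * c (u,v) + CR v > R)" by auto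
  show "(u \<in> ab) = ({v. (u, v) \<in> E \<and> v \<notin> ab} = {} \<or> (\<forall>v\<in>{v. (u, v) \<in> E \<and> v \<notin> ab}. R < b * c (u, v) + CR v))"
    using assms(4)[of u] u e by auto
  show "u \<notin> ab \<longrightarrow>
         nxt u \<in> {v. (u, v) \<in> E \<and> v \<notin> ab} \<and>
         (\<forall>v\<in>{v. (u, v) \<in> E \<and> v \<notin> ab}. b * c (u, nxt u) + CR (nxt u) \<le> b * c (u, v) + CR v) \<and>
         CR u = c (u, nxt u) + CR (nxt u)"
    using assms(5)[of u] u by auto
qed (use assms in auto)

lemma V_even: "j < n \<Longrightarrow> 2*j+2 \<in> Vn n" and V_odd: "j < n \<Longrightarrow> 2*j+1 \<in> Vn n"
  and V_ev2: "j \<le> n \<Longrightarrow> 2*j \<in> Vn n"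
  by (auto simp: Vn_def)

lemma ar:
  fixes a w :: real assumes "0 \<le> a" "0 < w"
  shows "2 * ((a+5)*w/2) = (a+4)*w + w" "2 * ((a+3)*w/2) = (a+4)*w - w"
    "(a+5)*w/2 < 2 * ((a+3)*w/2)" "(a+5)*w/2 \<le> (a+4)*w + w"
    "(a + 1 + 4) * (w/2) = (a+4)*w + w - (a+5)*w/2"
    "(a + 1 + 4) * (w/2) = (a+4)*w - (a+3)*w/2"
proof -
  have p: "0 \<le> a*w" using assms by simp
  show "2 * ((a+5)*w/2) = (a+4)*w + w" "2 * ((a+3)*w/2) = (a+4)*w - w"
    "(a+5)*w/2 \<le> (a+4)*w + w"
    "(a + 1 + 4) * (w/2) = (a+4)*w + w - (a+5)*w/2"
    "(a + 1 + 4) * (w/2) = (a+4)*w - (a+3)*w/2"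
    using assms p by (simp_all add: field_simps)
  have "0 < w * 2 + a * (w * 2)" using p assms by (simp add: algebra_simps add_pos_nonneg)
  then show "(a+5)*w/2 < 2 * ((a+3)*w/2)" by (simp add: field_simps)
qed

lemma step:
  assumes P: "soph_plan (Vn n) (En n) (cn n) 0 2 R ab CR nxt" and j: "j < n"
    and nab: "2*j \<notin> ab" and lb: "lo n j \<le> R - CR (2*j)" and ub: "R - CR (2*j) < lo n j + 2 * w n j"
  shows "2*j+2 \<notin> ab \<and> lo n (Suc j) \<le> R - CR (2*j+2) \<and> R - CR (2*j+2) < lo n (Suc j) + 2 * w n (Suc j)
    \<and> (nxt (2*j+2) = 2*j+1 \<longleftrightarrow> lo n j + w n j \<le> R - CR (2*j))
    \<and> CR (2*j+2) = CR (2*j) + (if nxt (2*j+2) = 2*j+1 then cx n j else cy n j)"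
proof -
  have wp: "w n j > 0" by (rule w_pos)
  note A = ar[of "real j" "w n j", OF _ wp, folded cx_def cy_def lo_def, simplified]
  have e1: "2*cx n j = lo n j + w n j" and e2: "2 * cy n j = lo n j - w n j" and xl: "cx n j < 2*cy n j"
    and e4: "cx n j \<le> lo n j + w n j" using A by auto
  have e5: "lo n (Suc j) = lo n j + w n j - cx n j" and e6: "lo n (Suc j) = lo n j - cy n j"
    and ws: "w n (Suc j) = w n j / 2"
    using A by (simp_all add: lo_def w_Suc add.commute add.left_commute)
  have aV: "2*j+1 \<in> Vn n" "2*j+1 \<noteq> 0" using j by (auto simp: Vn_def)
  have uV: "2*j+2 \<in> Vn n" "2*j+2 \<noteq> (0::nat)" using j by (auto simp: Vn_def)
  have a_ab: "2*j+1 \<in> ab \<longleftrightarrow> R < 2 * cx n j + CR (2*j)"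
    using soph_ab[OF P aV] nab j by (simp add: E_odd E_odd' c3 c3')
  show ?thesis
  proof (cases "lo n j + w n j \<le> R - CR (2*j)")
    case True
    then have ana: "2*j+1 \<notin> ab" using a_ab e1 by simp
    have nxa: "nxt (2*j+1) = 2*j" using soph_nxt(1)[OF P aV ana] by (simp add: E_odd E_odd')
    have CRa: "CR (2*j+1) = cx n j + CR (2*j)" using soph_nxt(4)[OF P aV ana] nxa by (simp add: c3 c3')
    have una: "2*j+2 \<notin> ab"
    proof
      assume "2*j+2 \<in> ab"
      then have "R < 2 * cn n (2*j+2, 2*j+1) + CR (2*j+1)"
        using soph_ab[OF P uV] ana j by (simp add: E_even E_even')
      then have "R < cx n j + CR (2*j)" using CRa by (simp add: c2 c2')
      then show False using True e4 by linarith
    qed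
    have nx: "nxt (2*j+2) = 2*j \<or> nxt (2*j+2) = 2*j+1" using soph_nxt(1)[OF P uV una] by (simp add: E_even E_even')
    have nxu: "nxt (2*j+2) = 2*j+1"
    proof (rule ccontr)
      assume "nxt (2*j+2) \<noteq> 2*j+1"
      then have "nxt (2*j+2) = 2*j" using nx by simp
      then have "2 * cn n (2*j+2, 2*j) + CR (2*j) \<le> 2 * cn n (2*j+2, 2*j+1) + CR (2*j+1)"
        using soph_nxt(3)[OF P uV una, of "2*j+1"] ana j by (simp add: E_even E_even')
      then have "2 * cy n j + CR (2*j) \<le> CR (2*j+1)" by (simp add: c1 c2 c1' c2')
      then show False using CRa xl by simp
    qed
    have CRu: "CR (2*j+2) = CR (2*j) + cx n j"
      using soph_nxt(4)[OF P uV una] nxu CRa by (simp add: c2 c2')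
    show ?thesis using una nxu CRu True ub e5 ws by simp
  next
    case False
    have ana: "2*j+1 \<in> ab" using a_ab False e1 by simp
    have una: "2*j+2 \<notin> ab"
    proof
      assume "2*j+2 \<in> ab"
      then have "R < 2 * cn n (2*j+2, 2*j) + CR (2*j)"
        using soph_ab[OF P uV] nab j by (simp add: E_even E_even')
      then have "R < 2 * cy n j + CR (2*j)" by (simp add: c1 c1')
      then show False using lb e2 wp by linarith
    qed
    have nxu: "nxt (2*j+2) = 2*j" using soph_nxt(1,2)[OF P uV una] ana by (auto simp: E_even E_even')
    have CRu: "CR (2*j+2) = CR (2*j) + cy n j" using soph_nxt(4)[OF P uV una] nxu by (simp add: c1 c1')
    show ?thesis using una nxu CRu False lb e6 ws by simp
  qed
qed


lemma arj: "2*cx n j = lo n j + w n j" "2 * cy n j = lo n j - w n j" "cx n j < 2*cy n j"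
    "cx n j \<le> lo n j + w n j" "lo n (Suc j) = lo n j + w n j - cx n j" "lo n (Suc j) = lo n j - cy n j"
    "w n (Suc j) = w n j / 2" "w n j > 0"
proof -
  have wp: "w n j > 0" by (rule w_pos)
  note A = ar[of "real j" "w n j", OF _ wp, folded cx_def cy_def lo_def, simplified]
  show "2*cx n j = lo n j + w n j" "2 * cy n j = lo n j - w n j" "cx n j < 2*cy n j"
    "cx n j \<le> lo n j + w n j" using A by auto
  show "lo n (Suc j) = lo n j + w n j - cx n j" "lo n (Suc j) = lo n j - cy n j"
    "w n (Suc j) = w n j / 2"
    using A by (simp_all add: lo_def w_Suc add.commute add.left_commute)
  show "w n j > 0" by (rule wp)
qed

lemma inv:
  assumes P: "soph_plan (Vn n) (En n) (cn n) 0 2 R ab CR nxt"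
    and R: "lo n 0 \<le> R" "R < lo n 0 + 2 * w n 0"
  shows "j \<le> n \<Longrightarrow> 2*j \<notin> ab \<and> lo n j \<le> R - CR (2*j) \<and> R - CR (2*j) < lo n j + 2 * w n j"
proof (induction j)
  case 0
  then show ?case using P R unfolding soph_plan_def by simp
next
  case (Suc j)
  then have j: "j < n" by simp
  have S: "2*j+2 \<notin> ab \<and> lo n (Suc j) \<le> R - CR (2*j+2) \<and> R - CR (2*j+2) < lo n (Suc j) + 2 * w n (Suc j)"
  proof -
    have IH: "2*j \<notin> ab \<and> lo n j \<le> R - CR (2*j) \<and> R - CR (2*j) < lo n j + 2 * w n j"
      using Suc.IH j by simp
    note st = step[OF P j IH[THEN conjunct1] IH[THEN conjunct2, THEN conjunct1] IH[THEN conjunct2, THEN conjunct2]]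
    show ?thesis using st by blast
  qed
  have e: "2 * Suc j = 2*j+2" by simp
  show ?case unfolding e using S by blast
qed

lemma bits:
  assumes P: "soph_plan (Vn n) (En n) (cn n) 0 2 R ab CR nxt"
    and R: "lo n 0 \<le> R" "R < lo n 0 + 2 * w n 0" and j: "j < n"
  shows "(nxt (2*j+2) = 2*j+1 \<longleftrightarrow> lo n j + w n j \<le> R - CR (2*j))
    \<and> CR (2*j+2) = CR (2*j) + (if nxt (2*j+2) = 2*j+1 then cx n j else cy n j)"
  using step[OF P j] inv[OF P R, of j] j by simp

fun rr :: "nat \<Rightarrow> real \<Rightarrow> nat \<Rightarrow> real" where
  "rr n R 0 = R"
| "rr n R (Suc j) = (if lo n j + w n j \<le> rr n R j then rr n R j - cx n j else rr n R j - cy n j)"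

definition bit :: "nat \<Rightarrow> real \<Rightarrow> nat \<Rightarrow> bool" where "bit n R j = (lo n j + w n j \<le> rr n R j)"
definition ab0 :: "nat \<Rightarrow> real \<Rightarrow> nat set" where "ab0 n R = {2*j+1 | j. j<n \<and> \<not> bit n R j}"
definition CR0 :: "nat \<Rightarrow> real \<Rightarrow> nat \<Rightarrow> real" where
  "CR0 n R u = (if even u then R - rr n R (u div 2) else R - rr n R (u div 2) + cx n (u div 2))"
definition nx0 :: "nat \<Rightarrow> real \<Rightarrow> nat \<Rightarrow> nat" where
  "nx0 n R u = (if odd u then u - 1 else if bit n R (u div 2 - 1) then u - 1 else u - 2)"

lemma rr_bound:
  assumes R: "lo n 0 \<le> R" "R < lo n 0 + 2 * w n 0"
  shows "lo n j \<le> rr n R j \<and> rr n R j < lo n j + 2 * w n j"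
proof (induction j)
  case 0 then show ?case using R by simp
next
  case (Suc j)
  then show ?case using arj[of n j] by auto
qed

lemma ab0_ev: "2*j \<notin> ab0 n R" unfolding ab0_def by auto presburger
lemma ab0_ev2: "Suc (Suc (2*j)) \<notin> ab0 n R" unfolding ab0_def by auto presburger
lemma ab0_odd: "(Suc (2*j) \<in> ab0 n R) = (j < n \<and> \<not> bit n R j)" unfolding ab0_def by auto
lemma CR0_ev: "CR0 n R (2*j) = R - rr n R j" by (simp add: CR0_def)
lemma CR0_ev2: "CR0 n R (Suc (Suc (2*j))) = R - rr n R (Suc j)" by (simp add: CR0_def)
lemma CR0_odd: "CR0 n R (Suc (2*j)) = R - rr n R j + cx n j" by (simp add: CR0_def)
lemma nx0_odd: "nx0 n R (Suc (2*j)) = 2*j" by (simp add: nx0_def)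
lemma nx0_ev2: "nx0 n R (Suc (Suc (2*j))) = (if bit n R j then Suc (2*j) else 2*j)" by (simp add: nx0_def)

lemma exists_plan:
  assumes R: "lo n 0 \<le> R" "R < lo n 0 + 2 * w n 0"
  shows "soph_plan (Vn n) (En n) (cn n) 0 2 R (ab0 n R) (CR0 n R) (nx0 n R)"
proof (rule soph_planI)
  show "ab0 n R \<subseteq> Vn n" unfolding ab0_def Vn_def by auto
  show "0 \<notin> ab0 n R" unfolding ab0_def by auto
  show "CR0 n R 0 = 0" by (simp add: CR0_def)
  fix u assume u: "u \<in> Vn n" "u \<noteq> 0"
  then obtain j where j: "j < n" "u = 2*j+1 \<or> u = 2*j+2" using V_cases by blast
  have B: "lo n j \<le> rr n R j \<and> rr n R j < lo n j + 2 * w n j" using rr_bound[OF R] .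
  note A = arj[of n j]
  show "u \<in> ab0 n R \<longleftrightarrow> (\<forall>v. (u,v)\<in>En n \<and> v\<notin>ab0 n R \<longrightarrow> 2 * cn n (u,v) + CR0 n R v > R)"
  proof (cases "u = 2*j+1")
    case True
    then show ?thesis using j A by (auto simp: E_odd' ab0_odd ab0_ev CR0_ev c3' bit_def)
  next
    case False
    then have u2: "u = Suc (Suc (2*j))" using j by simp
    have "2 * cn n (u, 2*j) + CR0 n R (2*j) \<le> R" using u2 A B by (simp add: c1' CR0_ev)
    then show ?thesis using u2 j by (auto simp: E_even' ab0_ev2 ab0_ev)
  qed
  show "u \<notin> ab0 n R \<Longrightarrow> (u, nx0 n R u)\<in>En n \<and> nx0 n R u \<notin> ab0 n R \<and>
        (\<forall>v. (u,v)\<in>En n \<and> v\<notin>ab0 n R \<longrightarrow> 2*cn n (u,nx0 n R u)+CR0 n R (nx0 n R u) \<le> 2*cn n (u,v)+CR0 n R v) \<and>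
        CR0 n R u = cn n (u,nx0 n R u) + CR0 n R (nx0 n R u)"
  proof (cases "u = 2*j+1")
    case True
    then show ?thesis using j by (auto simp: E_odd' ab0_odd ab0_ev CR0_ev CR0_odd c3' nx0_odd)
  next
    case False
    then have u2: "u = Suc (Suc (2*j))" using j by simp
    show ?thesis
    proof (cases "bit n R j")
      case True
      then show ?thesis using u2 j A
        by (auto simp: E_even' ab0_odd ab0_ev CR0_ev CR0_odd CR0_ev2 c1' c2' nx0_ev2 bit_def)
    next
      case False
      then show ?thesis using u2 j A
        by (auto simp: E_even' ab0_odd ab0_ev CR0_ev CR0_odd CR0_ev2 c1' c2' nx0_ev2 bit_def)
    qed
  qed
qed


lemma orbit_ok:
  assumes P: "soph_plan V E c t b R ab CR nxt" and EV: "E \<subseteq> V \<times> V" and s: "s \<in> V" "s \<notin> ab"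
  shows "(\<forall>l<k. (nxt^^l) s \<noteq> t) \<Longrightarrow> (nxt^^k) s \<in> V \<and> (nxt^^k) s \<notin> ab"
proof (induction k)
  case 0 then show ?case using s by simp
next
  case (Suc k)
  then have IH: "(nxt^^k) s \<in> V" "(nxt^^k) s \<notin> ab" "(nxt^^k) s \<noteq> t" by auto
  from soph_nxt(1,2)[OF P IH(1) IH(3) IH(2)] EV show ?case by auto
qed

lemma reach:
  assumes P: "soph_plan (Vn n) (En n) (cn n) 0 2 R ab CR nxt" and s: "2*n \<notin> ab"
  shows "d \<le> n \<Longrightarrow> \<exists>k. (nxt^^k) (2*n) = 2*(n-d) \<and> (\<forall>l<k. (nxt^^l) (2*n) \<noteq> 0)"
proof (induction d)
  case 0 then show ?case by (intro exI[of _ 0]) simp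
next
  case (Suc d)
  define j where "j = n - d - 1"
  have j: "j < n" "n - d = Suc j" "n - Suc d = j" using Suc.prems by (auto simp: j_def)
  from Suc.IH Suc.prems obtain k where k: "(nxt^^k) (2*n) = Suc (Suc (2*j))" "\<forall>l<k. (nxt^^l) (2*n) \<noteq> 0"
    using j by auto
  have sV: "2*n \<in> Vn n" by (simp add: Vn_def)
  note G = orbit_ok[OF P E_sub sV s]
  have uV: "Suc (Suc (2*j)) \<in> Vn n" "Suc (Suc (2*j)) \<noteq> 0" using j by (auto simp: Vn_def)
  have una: "Suc (Suc (2*j)) \<notin> ab" using G[of k] k by simp
  have nx: "nxt (Suc (Suc (2*j))) = 2*j \<or> nxt (Suc (Suc (2*j))) = Suc (2*j)"
    using soph_nxt(1)[OF P uV una] by (simp add: E_even')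
  then show ?case
  proof
    assume a: "nxt (Suc (Suc (2*j))) = 2*j"
    show ?case
    proof (intro exI[of _ "Suc k"] conjI)
      show "(nxt ^^ Suc k) (2 * n) = 2 * (n - Suc d)" using a k j by simp
      show "\<forall>l<Suc k. (nxt ^^ l) (2 * n) \<noteq> 0" using k by (auto simp: less_Suc_eq)
    qed
  next
    assume a: "nxt (Suc (Suc (2*j))) = Suc (2*j)"
    have all: "\<forall>l<Suc k. (nxt ^^ l) (2 * n) \<noteq> 0" using k by (auto simp: less_Suc_eq)
    have v1: "(nxt ^^ Suc k) (2 * n) = Suc (2*j)" using a k by simp
    have aV: "Suc (2*j) \<in> Vn n" "Suc (2*j) \<noteq> 0" using j by (auto simp: Vn_def)
    have ana: "Suc (2*j) \<notin> ab" using G[of "Suc k"] all v1 by simp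
    have nxa: "nxt (Suc (2*j)) = 2*j" using soph_nxt(1)[OF P aV ana] by (simp add: E_odd')
    show ?case
    proof (intro exI[of _ "Suc (Suc k)"] conjI)
      show "(nxt ^^ Suc (Suc k)) (2 * n) = 2 * (n - Suc d)" using v1 nxa j by simp
      show "\<forall>l<Suc (Suc k). (nxt ^^ l) (2 * n) \<noteq> 0" using all v1 by (auto simp: less_Suc_eq)
    qed
  qed
qed

lemma path_mem:
  assumes P: "soph_plan (Vn n) (En n) (cn n) 0 2 R ab CR nxt" and s: "2*n \<notin> ab" and j: "j < n"
  shows "(Suc (2*j) \<in> set (agent_path nxt (2*n) 0)) \<longleftrightarrow> nxt (Suc (Suc (2*j))) = Suc (2*j)"
proof -
  obtain k0 where k0: "(nxt^^k0) (2*n) = 0" "\<forall>l<k0. (nxt^^l) (2*n) \<noteq> 0"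
    using reach[OF P s, of n] by auto
  have K: "(LEAST k. (nxt^^k) (2*n) = 0) = k0"
    by (rule Least_equality) (use k0 in \<open>auto simp: not_less[symmetric]\<close>)
  have set: "x \<in> set (agent_path nxt (2*n) 0) \<longleftrightarrow> (\<exists>i\<le>k0. (nxt^^i) (2*n) = x)" for x
    unfolding agent_path_def K set_map set_upt image_iff Bex_def atLeastLessThan_iff
    by (auto simp: less_Suc_eq_le simp del: atLeastLessThan_iff)
  have sV: "2*n \<in> Vn n" by (simp add: Vn_def)
  note G = orbit_ok[OF P E_sub sV s]
  show ?thesis
  proof
    assume "Suc (2*j) \<in> set (agent_path nxt (2*n) 0)"
    then obtain i where i: "i \<le> k0" "(nxt^^i) (2*n) = Suc (2*j)" using set by blast
    have "i \<noteq> 0"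
    proof
      assume "i = 0"
      then have "2*n = Suc (2*j)" using i by simp
      then show False by presburger
    qed
    then obtain m where m: "i = Suc m" using not0_implies_Suc by blast
    have mk: "m < k0" using i m by simp
    have lt: "\<forall>l<m. (nxt^^l) (2*n) \<noteq> 0" "(nxt^^m) (2*n) \<noteq> 0"
      using k0(2) mk less_trans by blast+
    have vV: "(nxt^^m) (2*n) \<in> Vn n" "(nxt^^m) (2*n) \<notin> ab" using G[of m] lt by auto
    have "((nxt^^m) (2*n), nxt ((nxt^^m) (2*n))) \<in> En n" using soph_nxt(1)[OF P vV(1) lt(2) vV(2)] .
    moreover have "nxt ((nxt^^m) (2*n)) = Suc (2*j)" using i m by simp
    ultimately have "((nxt^^m) (2*n), 2*j+1) \<in> En n" by simp
    then have "(nxt^^m) (2*n) = 2*j+2" using E_to_odd by blast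
    then show "nxt (Suc (Suc (2*j))) = Suc (2*j)" using i m by simp
  next
    assume a: "nxt (Suc (Suc (2*j))) = Suc (2*j)"
    obtain k where k: "(nxt^^k) (2*n) = 2*(n - (n - Suc j))" "\<forall>l<k. (nxt^^l) (2*n) \<noteq> 0"
      using reach[OF P s, of "n - Suc j"] by auto
    have kv: "(nxt^^k) (2*n) = Suc (Suc (2*j))" using k j by simp
    have "k < k0"
    proof (rule ccontr)
      assume "\<not> k < k0"
      then have "k0 < k \<or> k0 = k" by linarith
      then show False
      proof
        assume "k0 < k" then show False using k(2) k0(1) by blast
      next
        assume "k0 = k" then show False using k0(1) kv by simp
      qed
    qed
    moreover have "(nxt^^Suc k) (2*n) = Suc (2*j)" using kv a by simp
    ultimately show "Suc (2*j) \<in> set (agent_path nxt (2*n) 0)" unfolding set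
      by (intro exI[of _ "Suc k"]) simp
  qed
qed


lemma diff:
  assumes P1: "soph_plan (Vn n) (En n) (cn n) 0 2 R1 ab1 CR1 nxt1"
    and P2: "soph_plan (Vn n) (En n) (cn n) 0 2 R2 ab2 CR2 nxt2"
    and R1: "lo n 0 \<le> R1" "R1 < lo n 0 + 2 * w n 0"
    and R2: "lo n 0 \<le> R2" "R2 < lo n 0 + 2 * w n 0"
    and same: "\<forall>j<n. (nxt1 (2*j+2) = 2*j+1) = (nxt2 (2*j+2) = 2*j+1)"
  shows "j \<le> n \<Longrightarrow> (R1 - CR1 (2*j)) - (R2 - CR2 (2*j)) = R1 - R2"
proof (induction j)
  case 0 then show ?case using P1 P2 unfolding soph_plan_def by simp
next
  case (Suc j)
  then have j: "j < n" by simp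
  have b1: "CR1 (2*j+2) = CR1 (2*j) + (if nxt1 (2*j+2) = 2*j+1 then cx n j else cy n j)"
    using bits[OF P1 R1 j] by blast
  have b2: "CR2 (2*j+2) = CR2 (2*j) + (if nxt2 (2*j+2) = 2*j+1 then cx n j else cy n j)"
    using bits[OF P2 R2 j] by blast
  have s: "(nxt1 (2*j+2) = 2*j+1) = (nxt2 (2*j+2) = 2*j+1)" using same j by blast
  have e: "2 * Suc j = 2*j+2" by simp
  have IH: "(R1 - CR1 (2*j)) - (R2 - CR2 (2*j)) = R1 - R2" using Suc.IH j by simp
  show ?case unfolding e using b1 b2 s IH by (cases "nxt1 (2*j+2) = 2*j+1") auto
qed

theorem theorem3:
  shows "\<exists>K::real. \<forall>n::nat. n \<ge> 1 \<longrightarrow>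
    (\<exists>b V E c s t S.
       b > 1 \<and> is_instance V E c s t \<and> real (card V) \<le> K * real n \<and>
       finite S \<and> card S = 2 ^ n \<and>
       (\<forall>R\<in>S. (\<exists>ab CR nxt. soph_plan V E c t b R ab CR nxt) \<and>
               (\<forall>ab CR nxt. soph_plan V E c t b R ab CR nxt \<longrightarrow> s \<notin> ab)) \<and>
       (\<forall>R1\<in>S. \<forall>R2\<in>S. R1 \<noteq> R2 \<longrightarrow>
          (\<forall>ab1 CR1 nxt1 ab2 CR2 nxt2.
             soph_plan V E c t b R1 ab1 CR1 nxt1 \<longrightarrow> soph_plan V E c t b R2 ab2 CR2 nxt2 \<longrightarrow>
             agent_path nxt1 s t \<noteq> agent_path nxt2 s t)))"
proof (rule exI[of _ 3], intro allI impI)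
  fix n :: nat assume n: "n \<ge> 1"
  define f where "f = (\<lambda>k::nat. 4 * 2^n + 2 * real k)"
  define S where "S = f ` {..<2^n}"
  have injf: "inj_on f {..<2^n}" unfolding f_def inj_on_def by simp
  have cardS: "card S = 2^n" unfolding S_def using card_image[OF injf] by simp
  have lo0: "lo n 0 = 4 * 2^n" "w n 0 = 2^n" by (simp_all add: lo_def w_def)
  have RS: "lo n 0 \<le> R \<and> R < lo n 0 + 2 * w n 0" if RinS: "R \<in> S" for R
  proof -
    obtain k where k: "k < 2^n" "R = f k" using RinS unfolding S_def by blast
    have "real k < 2^n" using k(1)
      by (metis of_nat_less_iff of_nat_numeral of_nat_power)
    then show ?thesis using k(2) lo0 unfolding f_def by simp
  qed
  show "\<exists>b V E c s t S.
       b > 1 \<and> is_instance V E c s t \<and> real (card V) \<le> 3 * real n \<and>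
       finite S \<and> card S = 2 ^ n \<and>
       (\<forall>R\<in>S. (\<exists>ab CR nxt. soph_plan V E c t b R ab CR nxt) \<and>
               (\<forall>ab CR nxt. soph_plan V E c t b R ab CR nxt \<longrightarrow> s \<notin> ab)) \<and>
       (\<forall>R1\<in>S. \<forall>R2\<in>S. R1 \<noteq> R2 \<longrightarrow>
          (\<forall>ab1 CR1 nxt1 ab2 CR2 nxt2.
             soph_plan V E c t b R1 ab1 CR1 nxt1 \<longrightarrow> soph_plan V E c t b R2 ab2 CR2 nxt2 \<longrightarrow>
             agent_path nxt1 s t \<noteq> agent_path nxt2 s t))"
  proof -
    have H1: "is_instance (Vn n) (En n) (cn n) (2 * n) 0" by (rule inst)
    have H2: "real (card (Vn n)) \<le> 3 * real n" using card_V n .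
    have H3: "finite S" unfolding S_def by simp
    have H5: "\<forall>R\<in>S. (\<exists>ab CR nxt. soph_plan (Vn n) (En n) (cn n) 0 2 R ab CR nxt) \<and>
               (\<forall>ab CR nxt. soph_plan (Vn n) (En n) (cn n) 0 2 R ab CR nxt \<longrightarrow> 2*n \<notin> ab)"
    proof (intro ballI conjI allI impI)
      fix R assume R: "R \<in> S"
      show "\<exists>ab CR nxt. soph_plan (Vn n) (En n) (cn n) 0 2 R ab CR nxt"
        using exists_plan RS[OF R] by blast
      fix ab CR nxt assume P: "soph_plan (Vn n) (En n) (cn n) 0 2 R ab CR nxt"
      show "2*n \<notin> ab" using inv[OF P, of n] RS[OF R] by simp
    qed
    have H6: "\<forall>R1\<in>S. \<forall>R2\<in>S. R1 \<noteq> R2 \<longrightarrow>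
          (\<forall>ab1 CR1 nxt1 ab2 CR2 nxt2.
             soph_plan (Vn n) (En n) (cn n) 0 2 R1 ab1 CR1 nxt1 \<longrightarrow> soph_plan (Vn n) (En n) (cn n) 0 2 R2 ab2 CR2 nxt2 \<longrightarrow>
             agent_path nxt1 (2*n) 0 \<noteq> agent_path nxt2 (2*n) 0)"
    proof (intro ballI allI impI)
    fix R1 R2 ab1 CR1 nxt1 ab2 CR2 nxt2
    assume R1: "R1 \<in> S" and R2: "R2 \<in> S" and ne: "R1 \<noteq> R2"
      and P1: "soph_plan (Vn n) (En n) (cn n) 0 2 R1 ab1 CR1 nxt1"
      and P2: "soph_plan (Vn n) (En n) (cn n) 0 2 R2 ab2 CR2 nxt2"
    show "agent_path nxt1 (2*n) 0 \<noteq> agent_path nxt2 (2*n) 0"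
    proof
      assume eq: "agent_path nxt1 (2*n) 0 = agent_path nxt2 (2*n) 0"
      have B1: "lo n 0 \<le> R1" "R1 < lo n 0 + 2 * w n 0" using RS[OF R1] by auto
      have B2: "lo n 0 \<le> R2" "R2 < lo n 0 + 2 * w n 0" using RS[OF R2] by auto
      have s1: "2*n \<notin> ab1" using inv[OF P1 B1, of n] by simp
      have s2: "2*n \<notin> ab2" using inv[OF P2 B2, of n] by simp
      have same: "\<forall>j<n. (nxt1 (2*j+2) = 2*j+1) = (nxt2 (2*j+2) = 2*j+1)"
      proof (intro allI impI)
        fix j assume j: "j < n"
        show "(nxt1 (2*j+2) = 2*j+1) = (nxt2 (2*j+2) = 2*j+1)"
          using path_mem[OF P1 s1 j] path_mem[OF P2 s2 j] eq by simp
      qed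
      have d: "(R1 - CR1 (2*n)) - (R2 - CR2 (2*n)) = R1 - R2"
        using diff[OF P1 P2 B1 B2 same, of n] by simp
      have i1: "lo n n \<le> R1 - CR1 (2*n)" "R1 - CR1 (2*n) < lo n n + 2" using inv[OF P1 B1, of n] w_nn by auto
      have i2: "lo n n \<le> R2 - CR2 (2*n)" "R2 - CR2 (2*n) < lo n n + 2" using inv[OF P2 B2, of n] w_nn by auto
      have small: "\<bar>R1 - R2\<bar> < 2" using d i1 i2 by linarith
      obtain k1 where k1: "R1 = f k1" using R1 unfolding S_def by blast
      obtain k2 where k2: "R2 = f k2" using R2 unfolding S_def by blast
      have "k1 \<noteq> k2" using ne k1 k2 by blast
      then have "k1 + 1 \<le> k2 \<or> k2 + 1 \<le> k1" by linarith
      then have "real k1 + 1 \<le> real k2 \<or> real k2 + 1 \<le> real k1" by (metis of_nat_1 of_nat_add of_nat_le_iff)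
      then show False using small k1 k2 unfolding f_def by linarith
    qed
    qed
    show ?thesis
      apply (rule exI[of _ "2::real"], rule exI[of _ "Vn n"], rule exI[of _ "En n"], rule exI[of _ "cn n"],
        rule exI[of _ "2*n"], rule exI[of _ "0::nat"], rule exI[of _ S])
      using H1 H2 H3 cardS H5 H6 by simp
  qed
qed

end
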